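(* Let $s,k$ be positive integers and $\epsilon\in(0,1)$. Then for all sufficiently large $n$ there exist sets $A,B\subseteq\mathbb{Z}$ with $|A|=|B|=n$ and $|A+B|>kn$ such that for every subset $B_{(s)}\subseteq B$ with $|B_{(s)}|\le s$ we have $|A+B_{(s)}|\le(2+\epsilon)n$.
   Context: For subsets $X,Y$ of an abelian group, $X+Y=\{x+y:x\in X,y\in Y\}$. *)

theory Defs
  imports Complex_Main
begin

definition sumset :: "int set \<Rightarrow> int set \<Rightarrow> int set" where
  "sumset X Y = {x + y | x y. x \<in> X \<and> y \<in> Y}"

end

theory Submission
  imports Defs
begin

lemma sumset_img: "sumset X Y = (\<lambda>(x,y). x + y) ` (X \<times> Y)"
  unfolding sumset_def by auto

lemma card_sumset_le: "finite X \<Longrightarrow> finite Y \<Longrightarrow> card (sumset X Y) \<le> card X * card Y"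
proof -
  assume "finite X" "finite Y"
  hence "card ((\<lambda>(x,y). x + y) ` (X \<times> Y)) \<le> card (X \<times> Y)" by (intro card_image_le) simp
  thus ?thesis unfolding sumset_img card_cartesian_product .
qed

lemma sumset_Un: "sumset (X \<union> Z) Y = sumset X Y \<union> sumset Z Y"
  unfolding sumset_def by auto

lemma finite_sumset: "finite X \<Longrightarrow> finite Y \<Longrightarrow> finite (sumset X Y)"
  unfolding sumset_img by simp

theorem proposition2p5:
  fixes s k :: nat and \<epsilon> :: real
  assumes "s > 0" and "k > 0" and "0 < \<epsilon>" and "\<epsilon> < 1"
  shows "\<forall>\<^sub>F n in sequentially. \<exists>A B :: int set.
           finite A \<and> finite B \<and> card A = n \<and> card B = n \<and>
           card (sumset A B) > k * n \<and>
           (\<forall>B'. B' \<subseteq> B \<and> card B' \<le> s \<longrightarrow>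
                 real (card (sumset A B')) \<le> (2 + \<epsilon>) * real n)"
proof -
  define m where "m = k + 1"
  define N where "N = nat \<lceil>real (m * s) / \<epsilon>\<rceil> + m + 1"
  show ?thesis unfolding eventually_sequentially
  proof (rule exI[of _ N], intro allI impI)
    fix n assume nN: "N \<le> n"
    have nm: "m < n" using nN unfolding N_def by linarith
    have "real (m * s) / \<epsilon> \<le> real n" using nN unfolding N_def by linarith
    hence ms: "real (m * s) \<le> \<epsilon> * real n" using assms(3) by (simp add: field_simps)
    define I where "I = {0..<int n - int m}"
    define X where "X = (\<lambda>j. int n * int j) ` {1..m}"
    define A where "A = I \<union> X"
    define B where "B = {0..<int n}"
    have fI: "finite I" "finite X" "finite B" unfolding I_def X_def B_def by auto
    have cI: "card I = n - m" unfolding I_def using nm by simp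
    have cX: "card X = m" unfolding X_def using nm
      by (subst card_image) (auto simp: inj_on_def)
    have disj: "I \<inter> X = {}"
    proof -
      have "int n * int j \<ge> int n" if "1 \<le> j" for j
        using that by (metis mult.right_neutral mult_left_mono of_nat_0_le_iff of_nat_1 of_nat_mono)
      thus ?thesis unfolding I_def X_def by force
    qed
    have cA: "card A = n" unfolding A_def using card_Un_disjoint[OF fI(1,2) disj] cI cX nm by simp
    have cB: "card B = n" unfolding B_def by simp
    have sub: "{int n..<int n * (int m + 1)} \<subseteq> sumset A B"
    proof
      fix x assume x: "x \<in> {int n..<int n * (int m + 1)}"
      have npos: "int n > 0" using nm by simp
      have q1: "x div int n \<ge> 1" using x npos zdiv_mono1[of "int n" x "int n"] by simp
      have "int n * (x div int n) \<le> x" using npos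
      proof -
        have "0 \<le> x mod int n" using npos by simp
        moreover have "x div int n * int n + x mod int n = x" by (rule div_mult_mod_eq)
        moreover have "x div int n * int n = int n * (x div int n)" by (rule mult.commute)
        ultimately show ?thesis by linarith
      qed
      hence "int n * (x div int n) < int n * (int m + 1)" using x by simp
      hence q2: "x div int n \<le> int m" using npos mult_less_cancel_left_pos by simp
      define j where "j = nat (x div int n)"
      have j: "x div int n = int j" "1 \<le> j" "j \<le> m" using q1 q2 unfolding j_def by auto
      have e1: "x div int n * int n + x mod int n = x" by (rule div_mult_mod_eq)
      have e2: "x div int n * int n = int n * int j" using j(1) by (simp add: mult.commute)
      have "x = int n * int j + x mod int n" using e1 e2 by linarith
      moreover have "int n * int j \<in> A" unfolding A_def X_def using j by auto
      moreover have "x mod int n \<in> B" unfolding B_def using npos by simp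
      ultimately show "x \<in> sumset A B" unfolding sumset_def by blast
    qed
    have "card {int n..<int n * (int m + 1)} = m * n"
      by (simp add: algebra_simps nat_mult_distrib)
    hence "m * n \<le> card (sumset A B)"
      using card_mono[OF finite_sumset sub] fI unfolding A_def by (simp add: A_def)
    hence big: "k * n < card (sumset A B)" unfolding m_def using nm by simp
    have small: "real (card (sumset A B')) \<le> (2 + \<epsilon>) * real n"
      if B': "B' \<subseteq> B" "card B' \<le> s" for B'
    proof -
      have fB': "finite B'" using B' fI(3) finite_subset by blast
      have s1: "sumset I B' \<subseteq> {0..<2 * int n}"
      proof
        fix z assume "z \<in> sumset I B'"
        then obtain x y where xy: "z = x + y" "x \<in> I" "y \<in> B'" unfolding sumset_def by blast
        have "y \<in> B" using B'(1) xy(3) by blast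
        hence h1: "0 \<le> y" "y < int n" unfolding B_def by auto
        have h2: "0 \<le> x" "x < int n - int m" using xy(2) unfolding I_def by auto
        show "z \<in> {0..<2 * int n}" using h1 h2 xy(1) by simp
      qed
      have c1: "card (sumset I B') \<le> 2 * n"
        using card_mono[OF _ s1] by simp
      have c2: "card (sumset X B') \<le> m * s"
      proof -
        have a: "card (sumset X B') \<le> card X * card B'" by (rule card_sumset_le[OF fI(2) fB'])
        have b: "card X * card B' \<le> m * s" unfolding cX by (rule mult_le_mono2[OF B'(2)])
        show ?thesis by (rule le_trans[OF a b])
      qed
      have "card (sumset A B') \<le> card (sumset I B') + card (sumset X B')"
        unfolding A_def sumset_Un by (rule card_Un_le)
      hence "card (sumset A B') \<le> 2 * n + m * s" using c1 c2 by linarith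
      hence "real (card (sumset A B')) \<le> 2 * real n + real (m * s)" by linarith
      thus ?thesis using ms by (simp add: algebra_simps)
    qed
    show "\<exists>A B :: int set.
           finite A \<and> finite B \<and> card A = n \<and> card B = n \<and>
           card (sumset A B) > k * n \<and>
           (\<forall>B'. B' \<subseteq> B \<and> card B' \<le> s \<longrightarrow>
                 real (card (sumset A B')) \<le> (2 + \<epsilon>) * real n)"
    proof -
      have fA: "finite A" unfolding A_def using fI by simp
      have sm: "\<forall>B'. B' \<subseteq> B \<and> card B' \<le> s \<longrightarrow>
                 real (card (sumset A B')) \<le> (2 + \<epsilon>) * real n" using small by blast
      show ?thesis using fA fI(3) cA cB big sm by blast
    qed
  qed
qed

end
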